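(* For every $i=1,\dots,n$ and every polygon in $\mathcal P_n$, the derivative of the perimeter $F$ in the direction of $\xi_i$ vanishes: $\xi_i(F)=0$. Thus the distribution $\mathcal D_n$ is tangent to the level hypersurfaces of $F$.
   Context: Let $n\ge3$ and let $\mathcal P_n$ be the $2n$-dimensional manifold of convex $n$-gons in $\mathbb R^2$. A polygon is encoded by the lines of its sides, cyclically ordered counterclockwise (indices mod $n$): $L_i=\{(x,y): x\cos\alpha_i+y\sin\alpha_i=p_i\}$, where $(\cos\alpha_i,\sin\alpha_i)$ is the outer unit normal of the $i$-th side. Thus $(\alpha_1,p_1,\dots,\alpha_n,p_n)$ are local coordinates, with $0<\alpha_{i+1}-\alpha_i<\pi$ (mod $2\pi$) and total turning $2\pi$. The positive side of $L_i$ is the open half-plane into which its outer normal points; the negative side is the other one, which contains the polygon. For each $i$, let $K_i$ be the circle tangent to the three lines $L_{i-1},L_i,L_{i+1}$ that lies on the negative sides of $L_{i-1}$ and $L_{i+1}$ and on the positive side of $L_i$. Let $C_i$ be its tangency point with $L_i$. Let $\xi_i$ be the vector field on $\mathcal P_n$ given by the infinitesimal counterclockwise rotation of the line $L_i$ about the point $C_i$, all other sides fixed. In coordinates, $\xi_i=\partial_{\alpha_i}+\det\big((\cos\alpha_i,\sin\alpha_i),C_i\big)\,\partial_{p_i}$. The distribution $\mathcal D_n$ is spanned by $\xi_1,\dots,\xi_n$. $F:\mathcal P_n\to\mathbb R$ is the perimeter. *)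

theory Defs
  imports "HOL-Analysis.Analysis"
begin

text \<open>Polygon coordinates: sides indexed by 0..n-1 (cyclically, mod n).
  alpha i = direction angle of the outer unit normal of side i, p i = support number.
  Points of the plane are pairs of reals.\<close>

definition cnxt :: "nat \<Rightarrow> nat \<Rightarrow> nat" where
  "cnxt n i = Suc i mod n"

definition cprv :: "nat \<Rightarrow> nat \<Rightarrow> nat" where
  "cprv n i = (i + n - 1) mod n"

definition nrm :: "real \<Rightarrow> real \<times> real" where
  "nrm a = (cos a, sin a)"

definition dotp :: "real \<times> real \<Rightarrow> real \<times> real \<Rightarrow> real" where
  "dotp u v = fst u * fst v + snd u * snd v"

definition det2 :: "real \<times> real \<Rightarrow> real \<times> real \<Rightarrow> real" where
  "det2 u v = fst u * snd v - snd u * fst v"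

definition on_line :: "real \<Rightarrow> real \<Rightarrow> real \<times> real \<Rightarrow> bool" where
  "on_line a c q \<longleftrightarrow> dotp (nrm a) q = c"

definition vertex :: "nat \<Rightarrow> (nat \<Rightarrow> real) \<Rightarrow> (nat \<Rightarrow> real) \<Rightarrow> nat \<Rightarrow> real \<times> real" where
  "vertex n alpha p i =
     (THE q. on_line (alpha i) (p i) q \<and> on_line (alpha (cnxt n i)) (p (cnxt n i)) q)"

definition red_angle :: "real \<Rightarrow> real" where
  "red_angle x = x - 2 * pi * of_int \<lfloor>x / (2 * pi)\<rfloor>"

definition turn :: "nat \<Rightarrow> (nat \<Rightarrow> real) \<Rightarrow> nat \<Rightarrow> real" where
  "turn n alpha i = red_angle (alpha (cnxt n i) - alpha i)"

definition tng :: "real \<Rightarrow> real \<times> real" where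
  "tng a = (- sin a, cos a)"

definition convex_ngon :: "nat \<Rightarrow> (nat \<Rightarrow> real) \<Rightarrow> (nat \<Rightarrow> real) \<Rightarrow> bool" where
  "convex_ngon n alpha p \<longleftrightarrow>
     3 \<le> n \<and>
     (\<forall>i<n. 0 < turn n alpha i \<and> turn n alpha i < pi) \<and>
     (\<Sum>i<n. turn n alpha i) = 2 * pi \<and>
     (\<forall>i<n. dotp (tng (alpha i)) (vertex n alpha p i - vertex n alpha p (cprv n i)) > 0)"

definition perimeter :: "nat \<Rightarrow> (nat \<Rightarrow> real) \<Rightarrow> (nat \<Rightarrow> real) \<Rightarrow> real" where
  "perimeter n alpha p = (\<Sum>i<n. dist (vertex n alpha p (cprv n i)) (vertex n alpha p i))"

text \<open>Circle K_i with centre c and radius r: tangent to L_(i-1), L_i, L_(i+1),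
  lying on the negative sides of L_(i-1), L_(i+1) and on the positive side of L_i.
  (A circle of radius r centred at c is tangent to the line {x. <n,x> = q}
  and lies on its negative side iff q - <n,c> = r; on the positive side iff
  <n,c> - q = r.)\<close>
definition circK :: "nat \<Rightarrow> (nat \<Rightarrow> real) \<Rightarrow> (nat \<Rightarrow> real) \<Rightarrow> nat \<Rightarrow> real \<times> real \<Rightarrow> real \<Rightarrow> bool" where
  "circK n alpha p i c r \<longleftrightarrow>
     r > 0 \<and>
     p (cprv n i) - dotp (nrm (alpha (cprv n i))) c = r \<and>
     p (cnxt n i) - dotp (nrm (alpha (cnxt n i))) c = r \<and>
     dotp (nrm (alpha i)) c - p i = r"

definition tangpt :: "nat \<Rightarrow> (nat \<Rightarrow> real) \<Rightarrow> (nat \<Rightarrow> real) \<Rightarrow> nat \<Rightarrow> real \<times> real" where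
  "tangpt n alpha p i =
     (THE C. \<exists>c r. circK n alpha p i c r \<and> on_line (alpha i) (p i) C \<and> dist c C = r)"

end

theory Submission
  imports Defs
begin

definition den :: "real \<Rightarrow> real \<Rightarrow> real" where
  "den a b = sin b * cos a - cos b * sin a"

definition vf :: "real \<Rightarrow> real \<Rightarrow> real \<Rightarrow> real \<Rightarrow> real \<times> real" where
  "vf a p b q = ((p * sin b - q * sin a) / den a b, (q * cos a - p * cos b) / den a b)"

lemma vf_on:
  assumes "den a b \<noteq> 0"
  shows "on_line a p (vf a p b q) \<and> on_line b q (vf a p b q)"
proof -
  have 1: "cos a * (p * sin b - q * sin a) + sin a * (q * cos a - p * cos b) = p * den a b"
    by (simp add: den_def algebra_simps)
  have 2: "cos b * (p * sin b - q * sin a) + sin b * (q * cos a - p * cos b) = q * den a b"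
    by (simp add: den_def algebra_simps)
  have "cos a * ((p * sin b - q * sin a)/den a b) + sin a * ((q * cos a - p * cos b)/den a b) = p"
    unfolding times_divide_eq_right add_divide_distrib[symmetric] 1 using assms by simp
  moreover have "cos b * ((p * sin b - q * sin a)/den a b) + sin b * ((q * cos a - p * cos b)/den a b) = q"
    unfolding times_divide_eq_right add_divide_distrib[symmetric] 2 using assms by simp
  ultimately show ?thesis unfolding on_line_def vf_def dotp_def nrm_def by simp
qed

lemma vf_unique:
  assumes "den a b \<noteq> 0" "on_line a p X" "on_line b q X"
  shows "X = vf a p b q"
proof -
  obtain x y where X: "X = (x,y)" by (cases X)
  have e1: "cos a * x + sin a * y = p" and e2: "cos b * x + sin b * y = q"
    using assms X by (auto simp: on_line_def dotp_def nrm_def)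
  have "x * den a b = p * sin b - q * sin a"
    unfolding den_def by (simp add: e1[symmetric] e2[symmetric] algebra_simps)
  moreover have "y * den a b = q * cos a - p * cos b"
    unfolding den_def by (simp add: e1[symmetric] e2[symmetric] algebra_simps)
  ultimately show ?thesis using assms(1) X unfolding vf_def
    by (simp add: field_simps)
qed

lemma vertex_eq:
  assumes "den (alpha k) (alpha (cnxt n k)) \<noteq> 0"
  shows "vertex n alpha p k = vf (alpha k) (p k) (alpha (cnxt n k)) (p (cnxt n k))"
  unfolding vertex_def
  by (rule the_equality) (use vf_on[OF assms] vf_unique[OF assms] in auto)

lemma den_deriv:
  fixes a b da db :: real
  shows "((\<lambda>x. den (a + x*da) (b + x*db)) has_real_derivative (db - da) * (cos a * cos b + sin a * sin b)) (at 0)"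
  unfolding den_def
  by (rule derivative_eq_intros refl | simp)+ (simp add: algebra_simps)


lemma alg1:
  fixes sa ca sb cb p q dp dq da db :: real
  assumes "sb * ca - cb * sa \<noteq> 0"
  shows "((dp * sb + p * cb * db - dq * sa - q * ca * da) * (sb * ca - cb * sa) - (p * sb - q * sa) * ((db-da) * (ca * cb+sa * sb)))/((sb * ca - cb * sa) * (sb * ca - cb * sa))
   = ((dp - da * (-sa * ((p * sb-q * sa)/(sb * ca - cb * sa)) + ca * ((q * ca-p * cb)/(sb * ca - cb * sa)))) * sb - (dq - db * (-sb * ((p * sb-q * sa)/(sb * ca - cb * sa)) + cb * ((q * ca-p * cb)/(sb * ca - cb * sa)))) * sa)/(sb * ca - cb * sa)"
  using assms by (simp add: divide_simps) algebra

lemma alg2: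
  fixes sa ca sb cb p q dp dq da db :: real
  assumes "sb * ca - cb * sa \<noteq> 0"
  shows "((dq * ca - q * sa * da - dp * cb + p * sb * db) * (sb * ca - cb * sa) - (q * ca - p * cb) * ((db-da) * (ca * cb+sa * sb)))/((sb * ca - cb * sa) * (sb * ca - cb * sa))
   = ((dq - db * (-sb * ((p * sb-q * sa)/(sb * ca - cb * sa)) + cb * ((q * ca-p * cb)/(sb * ca - cb * sa)))) * ca - (dp - da * (-sa * ((p * sb-q * sa)/(sb * ca - cb * sa)) + ca * ((q * ca-p * cb)/(sb * ca - cb * sa)))) * cb)/(sb * ca - cb * sa)"
  using assms by (simp add: divide_simps) algebra


lemma vf_deriv:
  fixes a b p q da db dp dq :: real
  assumes "den a b \<noteq> 0"
  shows "((\<lambda>t. fst (vf (a+t*da) (p+t*dp) (b+t*db) (q+t*dq))) has_real_derivative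
     fst (vf a (dp - da * dotp (tng a) (vf a p b q)) b (dq - db * dotp (tng b) (vf a p b q)))) (at 0)"
   and "((\<lambda>t. snd (vf (a+t*da) (p+t*dp) (b+t*db) (q+t*dq))) has_real_derivative
     snd (vf a (dp - da * dotp (tng a) (vf a p b q)) b (dq - db * dotp (tng b) (vf a p b q)))) (at 0)"
proof -
  have N: "((\<lambda>t. (p+t*dp) * sin (b+t*db) - (q+t*dq) * sin (a+t*da)) has_real_derivative
     (dp * sin b + p * cos b * db - dq * sin a - q * cos a * da)) (at 0)"
    by (rule derivative_eq_intros refl | simp)+
  have "((\<lambda>t. ((p+t*dp) * sin (b+t*db) - (q+t*dq) * sin (a+t*da)) / den (a + t*da) (b + t*db)) has_real_derivative
     ((dp * sin b + p * cos b * db - dq * sin a - q * cos a * da) * den a b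
      - (p * sin b - q * sin a) * ((db - da) * (cos a * cos b + sin a * sin b))) / (den a b * den a b)) (at 0)"
    using DERIV_divide[OF N den_deriv] assms by simp
  moreover have "((dp * sin b + p * cos b * db - dq * sin a - q * cos a * da) * den a b
      - (p * sin b - q * sin a) * ((db - da) * (cos a * cos b + sin a * sin b))) / (den a b * den a b)
     = fst (vf a (dp - da * dotp (tng a) (vf a p b q)) b (dq - db * dotp (tng b) (vf a p b q)))"
    unfolding vf_def fst_conv dotp_def tng_def den_def snd_conv
    by (rule alg1) (use assms in \<open>simp add: den_def\<close>)
  ultimately show "((\<lambda>t. fst (vf (a+t*da) (p+t*dp) (b+t*db) (q+t*dq))) has_real_derivative
     fst (vf a (dp - da * dotp (tng a) (vf a p b q)) b (dq - db * dotp (tng b) (vf a p b q)))) (at 0)"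
    unfolding vf_def fst_conv by simp
  have N2: "((\<lambda>t. (q+t*dq) * cos (a+t*da) - (p+t*dp) * cos (b+t*db)) has_real_derivative
     (dq * cos a - q * sin a * da - dp * cos b + p * sin b * db)) (at 0)"
    by (rule derivative_eq_intros refl | simp)+
  have "((\<lambda>t. ((q+t*dq) * cos (a+t*da) - (p+t*dp) * cos (b+t*db)) / den (a + t*da) (b + t*db)) has_real_derivative
     ((dq * cos a - q * sin a * da - dp * cos b + p * sin b * db) * den a b
      - (q * cos a - p * cos b) * ((db - da) * (cos a * cos b + sin a * sin b))) / (den a b * den a b)) (at 0)"
    using DERIV_divide[OF N2 den_deriv] assms by simp
  moreover have "((dq * cos a - q * sin a * da - dp * cos b + p * sin b * db) * den a b
      - (q * cos a - p * cos b) * ((db - da) * (cos a * cos b + sin a * sin b))) / (den a b * den a b)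
     = snd (vf a (dp - da * dotp (tng a) (vf a p b q)) b (dq - db * dotp (tng b) (vf a p b q)))"
    unfolding vf_def fst_conv dotp_def tng_def den_def snd_conv
    by (rule alg2) (use assms in \<open>simp add: den_def\<close>)
  ultimately show "((\<lambda>t. snd (vf (a+t*da) (p+t*dp) (b+t*db) (q+t*dq))) has_real_derivative
     snd (vf a (dp - da * dotp (tng a) (vf a p b q)) b (dq - db * dotp (tng b) (vf a p b q)))) (at 0)"
    unfolding vf_def snd_conv by simp
qed


lemma algA:
  fixes sa ca sb cb x y r :: real
  assumes "sb * ca - cb * sa \<noteq> 0" "sa^2 + ca^2 = 1" "sb^2 + cb^2 = 1"
  defines "q \<equiv> cb * x + sb * y"
  defines "p \<equiv> r + ca * (x + r * cb) + sa * (y + r * sb)"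
  defines "D \<equiv> sb * ca - cb * sa"
  defines "P \<equiv> (- sb * x + cb * y) - (- sb * ((p * sb - q * sa) / D) + cb * ((q * ca - p * cb) / D))"
  shows "- sa * ((0 * sb - P * sa) / D) + ca * ((P * ca - 0 * cb) / D)
        - (- sb * ((0 * sb - P * sa) / D) + cb * ((P * ca - 0 * cb) / D)) = r"
  using assms(1) unfolding P_def D_def p_def q_def
  apply (simp add: divide_simps)
  using assms(2,3) by algebra

lemma algB:
  fixes sa ca sb cb x y r :: real
  assumes "sb * ca - cb * sa \<noteq> 0" "sa^2 + ca^2 = 1" "sb^2 + cb^2 = 1"
  defines "p \<equiv> ca * x + sa * y"
  defines "q \<equiv> r + cb * (x + r * ca) + sb * (y + r * sa)"
  defines "D \<equiv> sb * ca - cb * sa"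
  defines "P \<equiv> (- sa * x + ca * y) - (- sa * ((p * sb - q * sa) / D) + ca * ((q * ca - p * cb) / D))"
  shows "- sa * ((P * sb - 0 * sa) / D) + ca * ((0 * ca - P * cb) / D)
        - (- sb * ((P * sb - 0 * sa) / D) + cb * ((0 * ca - P * cb) / D)) = - r"
  using assms(1) unfolding P_def D_def p_def q_def
  apply (simp add: divide_simps)
  using assms(2,3) by algebra


lemma circ_center:
  assumes "on_line a q C" "dotp (nrm a) c - q = r" "dist c C = r"
  shows "c = (fst C + r * cos a, snd C + r * sin a)"
proof -
  define w1 where "w1 = fst c - fst C"
  define w2 where "w2 = snd c - snd C"
  have e: "cos a * w1 + sin a * w2 = r"
    using assms(1,2) unfolding w1_def w2_def on_line_def dotp_def nrm_def by (simp add: algebra_simps)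
  have "r = sqrt (w1^2 + w2^2)"
    using assms(3) unfolding w1_def w2_def
    by (metis dist_Pair_Pair dist_real_def power2_abs prod.collapse)
  hence "r^2 = w1^2 + w2^2" by simp
  hence "(- sin a * w1 + cos a * w2)^2 = 0"
    using e sin_cos_squared_add[of a] by algebra
  hence e2: "- sin a * w1 + cos a * w2 = 0" by simp
  have "w1 = cos a * (cos a * w1 + sin a * w2) - sin a * (- sin a * w1 + cos a * w2)"
    using sin_cos_squared_add[of a] by algebra
  hence "w1 = r * cos a" using e e2 by (simp add: mult.commute)
  moreover have "w2 = sin a * (cos a * w1 + sin a * w2) + cos a * (- sin a * w1 + cos a * w2)"
    using sin_cos_squared_add[of a] by algebra
  hence "w2 = r * sin a" using e e2 by (simp add: mult.commute)
  ultimately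
  show ?thesis unfolding w1_def w2_def by (simp add: prod_eq_iff)
qed

lemma cos_pos_aux:
  assumes "den a b > 0"
  shows "1 + (cos a * cos b + sin a * sin b) > 0"
proof -
  have "(den a b)^2 + (cos a * cos b + sin a * sin b)^2 = 1"
    unfolding den_def using sin_cos_squared_add[of a] sin_cos_squared_add[of b] by algebra
  moreover have "cos a * cos b + sin a * sin b \<ge> -1"
    using cos_diff[of b a] cos_ge_minus_one[of "b - a"] by (simp add: mult.commute)
  moreover have "(den a b)^2 > 0" using assms by simp
  ultimately show ?thesis
  proof -
    assume h: "(den a b)^2 + (cos a * cos b + sin a * sin b)^2 = 1"
      "cos a * cos b + sin a * sin b \<ge> -1" "(den a b)^2 > 0"
    show ?thesis
    proof (rule ccontr)
      assume "\<not> ?thesis"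
      hence "cos a * cos b + sin a * sin b = -1" using h(2) by simp
      thus False using h(1,3) by simp
    qed
  qed
qed

lemma dist_deriv:
  fixes f1 f2 g1 g2 :: "real \<Rightarrow> real"
  assumes "(f1 has_real_derivative f1') (at 0)" "(f2 has_real_derivative f2') (at 0)"
    "(g1 has_real_derivative g1') (at 0)" "(g2 has_real_derivative g2') (at 0)"
    "(f1 0, f2 0) \<noteq> (g1 0, g2 0)"
  shows "((\<lambda>t. dist (f1 t, f2 t) (g1 t, g2 t)) has_real_derivative
     ((f1 0 - g1 0) * (f1' - g1') + (f2 0 - g2 0) * (f2' - g2')) / dist (f1 0, f2 0) (g1 0, g2 0)) (at 0)"
proof -
  have dd: "\<And>t. dist (f1 t, f2 t) (g1 t, g2 t) = sqrt ((f1 t - g1 t)^2 + (f2 t - g2 t)^2)"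
    by (simp add: dist_Pair_Pair dist_real_def)
  have pos: "(f1 0 - g1 0)^2 + (f2 0 - g2 0)^2 > 0"
    using assms(5) by (smt (verit) prod.inject sum_power2_gt_zero_iff)
  have "((\<lambda>t. sqrt ((f1 t - g1 t)^2 + (f2 t - g2 t)^2)) has_real_derivative
     (inverse (sqrt ((f1 0 - g1 0)^2 + (f2 0 - g2 0)^2)) / 2) *
       (2 * (f1 0 - g1 0) * (f1' - g1') + 2 * (f2 0 - g2 0) * (f2' - g2'))) (at 0)"
    apply (rule DERIV_chain2[where f = sqrt])
     apply (rule DERIV_real_sqrt[OF pos])
    apply (rule derivative_eq_intros refl assms(1-4) | simp)+
    apply (simp add: algebra_simps)
    done
  then show ?thesis unfolding dd
    by (rule DERIV_cong) (simp add: divide_simps; simp add: algebra_simps)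
qed


lemma decomp:
  fixes c s wx wy :: real
  assumes "s^2 + c^2 = 1" "c * wx + s * wy = 0"
  shows "wx = - s * (- s * wx + c * wy)" "wy = c * (- s * wx + c * wy)"
proof -
  have cw: "c * wx = - (s * wy)" using assms(2) by simp
  have "wx = wx * (s^2 + c^2)" using assms(1) by simp
  also have "\<dots> = s * s * wx + c * (c * wx)" by (simp add: algebra_simps power2_eq_square)
  also have "\<dots> = - s * (- s * wx + c * wy)" unfolding cw by (simp add: algebra_simps)
  finally show "wx = - s * (- s * wx + c * wy)" .
  have sw: "s * wy = - (c * wx)" using assms(2) by simp
  have "wy = wy * (s^2 + c^2)" using assms(1) by simp
  also have "\<dots> = s * (s * wy) + c * c * wy" by (simp add: algebra_simps power2_eq_square)
  also have "\<dots> = c * (- s * wx + c * wy)" unfolding sw by (simp add: algebra_simps)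
  finally show "wy = c * (- s * wx + c * wy)" .
qed

lemma tang_char:
  fixes a0 a1 a2 p0 p1 p2 :: real
  assumes D0: "den a0 a1 > 0" and D1: "den a1 a2 > 0"
  assumes l: "dotp (tng a1) (vf a1 p1 a2 p2 - vf a0 p0 a1 p1) > 0"
  shows "\<exists>!C. \<exists>c r. (r > 0 \<and> p0 - dotp (nrm a0) c = r \<and> p2 - dotp (nrm a2) c = r
           \<and> dotp (nrm a1) c - p1 = r) \<and> on_line a1 p1 C \<and> dist c C = r"
proof -
  define v0 where "v0 = vf a0 p0 a1 p1"
  define v1 where "v1 = vf a1 p1 a2 p2"
  define K0 where "K0 = (1 + (cos a0 * cos a1 + sin a0 * sin a1)) / den a0 a1"
  define K1 where "K1 = (1 + (cos a1 * cos a2 + sin a1 * sin a2)) / den a1 a2"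
  define L where "L = dotp (tng a1) (v1 - v0)"
  have K0: "K0 > 0" unfolding K0_def using cos_pos_aux[OF D0] D0 by simp
  have K1: "K1 > 0" unfolding K1_def using cos_pos_aux[OF D1] D1 by simp
  have L: "L > 0" using l unfolding L_def v0_def v1_def .
  define R where "R = L / (K0 + K1)"
  have R: "R > 0" unfolding R_def using K0 K1 L by simp
  define Cs where "Cs = (fst v0 - sin a1 * (R * K0), snd v0 + cos a1 * (R * K0))"
  have v0a: "cos a0 * fst v0 + sin a0 * snd v0 = p0" "cos a1 * fst v0 + sin a1 * snd v0 = p1"
    using vf_on[of a0 a1 p0 p1] D0 unfolding v0_def on_line_def dotp_def nrm_def by auto
  have v1a: "cos a1 * fst v1 + sin a1 * snd v1 = p1" "cos a2 * fst v1 + sin a2 * snd v1 = p2"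
    using vf_on[of a1 a2 p1 p2] D1 unfolding v1_def on_line_def dotp_def nrm_def by auto
  have s1: "(sin a1)^2 + (cos a1)^2 = 1" by simp
  have uniq: "C = Cs" if h: "\<exists>c r. (r > 0 \<and> p0 - dotp (nrm a0) c = r \<and> p2 - dotp (nrm a2) c = r
           \<and> dotp (nrm a1) c - p1 = r) \<and> on_line a1 p1 C \<and> dist c C = r" for C
  proof -
    obtain c r where r: "r > 0" and e0: "p0 - dotp (nrm a0) c = r" and e2: "p2 - dotp (nrm a2) c = r"
      and e1: "dotp (nrm a1) c - p1 = r" and onC: "on_line a1 p1 C" and dC: "dist c C = r"
      using h by blast
    have cc: "c = (fst C + r * cos a1, snd C + r * sin a1)"
      by (rule circ_center[OF onC e1 dC])
    define x where "x = fst C"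
    define y where "y = snd C"
    have onC': "cos a1 * x + sin a1 * y = p1" using onC unfolding x_def y_def on_line_def dotp_def nrm_def by simp
    have e0': "p0 - (cos a0 * (x + r * cos a1) + sin a0 * (y + r * sin a1)) = r"
      using e0 unfolding cc x_def y_def dotp_def nrm_def by simp
    have e2': "p2 - (cos a2 * (x + r * cos a1) + sin a2 * (y + r * sin a1)) = r"
      using e2 unfolding cc x_def y_def dotp_def nrm_def by simp
    define d0 where "d0 = - sin a1 * (x - fst v0) + cos a1 * (y - snd v0)"
    define d1 where "d1 = - sin a1 * (fst v1 - x) + cos a1 * (snd v1 - y)"
    have o0: "cos a1 * (x - fst v0) + sin a1 * (y - snd v0) = 0" using v0a onC' by (simp add: algebra_simps)
    have o1: "cos a1 * (fst v1 - x) + sin a1 * (snd v1 - y) = 0" using v1a onC' by (simp add: algebra_simps)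
    have xd: "x = fst v0 - sin a1 * d0" using decomp(1)[OF s1 o0] unfolding d0_def by simp
    have yd: "y = snd v0 + cos a1 * d0" using decomp(2)[OF s1 o0] unfolding d0_def by simp
    have xd1: "x = fst v1 + sin a1 * d1" using decomp(1)[OF s1 o1] unfolding d1_def by simp
    have yd1: "y = snd v1 - cos a1 * d1" using decomp(2)[OF s1 o1] unfolding d1_def by simp
    have hd0: "d0 * den a0 a1 = r * (1 + (cos a0 * cos a1 + sin a0 * sin a1))"
      using e0' v0a unfolding den_def xd yd by (simp add: algebra_simps)
    have hd1: "d1 * den a1 a2 = r * (1 + (cos a1 * cos a2 + sin a1 * sin a2))"
      using e2' v1a unfolding den_def xd1 yd1 by (simp add: algebra_simps)
    have "L = d0 + d1" unfolding L_def d0_def d1_def dotp_def tng_def by (simp add: algebra_simps)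
    moreover have "d0 = r * K0" using hd0 D0 unfolding K0_def by (simp add: field_simps)
    moreover have "d1 = r * K1" using hd1 D1 unfolding K1_def by (simp add: field_simps)
    ultimately have "r = R" "d0 = R * K0" unfolding R_def using K0 K1 by (auto simp: field_simps)
    from xd yd show "C = Cs" unfolding Cs_def x_def y_def using \<open>d0 = R * K0\<close> by (simp add: prod_eq_iff)
  qed
  define cs where "cs = (fst Cs + R * cos a1, snd Cs + R * sin a1)"
  have exi: "(R > 0 \<and> p0 - dotp (nrm a0) cs = R \<and> p2 - dotp (nrm a2) cs = R
           \<and> dotp (nrm a1) cs - p1 = R) \<and> on_line a1 p1 Cs \<and> dist cs Cs = R"
  proof (intro conjI R)
    have "R * K0 * den a0 a1 = R * (1 + (cos a0 * cos a1 + sin a0 * sin a1))"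
      unfolding K0_def using D0 by simp
    then show "p0 - dotp (nrm a0) cs = R"
      unfolding cs_def Cs_def dotp_def nrm_def den_def using v0a
      by (simp add: algebra_simps)
    have o: "cos a1 * (fst v1 - fst v0) + sin a1 * (snd v1 - snd v0) = 0"
      using v0a v1a by (simp add: algebra_simps)
    have Le: "L = - sin a1 * (fst v1 - fst v0) + cos a1 * (snd v1 - snd v0)"
      unfolding L_def dotp_def tng_def by simp
    have v1d: "fst v1 = fst v0 - sin a1 * L" "snd v1 = snd v0 + cos a1 * L"
      using decomp[OF s1 o] unfolding Le by simp_all
    have RK: "R * K0 = L - R * K1" unfolding R_def using K0 K1 by (simp add: field_simps)
    have "R * K1 * den a1 a2 = R * (1 + (cos a1 * cos a2 + sin a1 * sin a2))"
      unfolding K1_def using D1 by simp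
    then show "p2 - dotp (nrm a2) cs = R"
      unfolding cs_def Cs_def dotp_def nrm_def den_def RK using v1a v1d
      by (simp add: algebra_simps)
    have "cos a1 * (fst v0 - sin a1 * (R * K0) + R * cos a1) +
       sin a1 * (snd v0 + cos a1 * (R * K0) + R * sin a1) - p1
      = (cos a1 * fst v0 + sin a1 * snd v0) + R * (sin a1 * sin a1 + cos a1 * cos a1) - p1"
      by (simp only: algebra_simps)
    moreover have "sin a1 * sin a1 + cos a1 * cos a1 = 1" using s1 by (simp add: power2_eq_square)
    ultimately show "dotp (nrm a1) cs - p1 = R"
      unfolding cs_def Cs_def dotp_def nrm_def fst_conv snd_conv using v0a by simp
    show "on_line a1 p1 Cs"
      unfolding on_line_def Cs_def dotp_def nrm_def fst_conv snd_conv using v0a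
      by (simp add: algebra_simps)
    have "dist cs Cs = dist (fst Cs + R * cos a1, snd Cs + R * sin a1) (fst Cs, snd Cs)"
      unfolding cs_def by simp
    also have "\<dots> = sqrt ((R * cos a1)^2 + (R * sin a1)^2)"
      by (subst dist_Pair_Pair) (simp add: dist_real_def)
    also have "(R * cos a1)^2 + (R * sin a1)^2 = R^2 * ((sin a1)^2 + (cos a1)^2)"
      by (simp only: power_mult_distrib algebra_simps)
    also have "\<dots> = R^2" by simp
    finally show "dist cs Cs = R" using R by simp
  qed
  show ?thesis
    by (rule ex1I[of _ Cs]) (use exi uniq in blast)+
qed

lemma halfA:
  assumes D: "den a b \<noteq> 0" and onC: "on_line b q C"
    and cc: "c = (fst C + r * cos b, snd C + r * sin b)" and e: "p - dotp (nrm a) c = r"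
  shows "dotp (tng a) (vf a 0 b (dotp (tng b) C - dotp (tng b) (vf a p b q)))
       - dotp (tng b) (vf a 0 b (dotp (tng b) C - dotp (tng b) (vf a p b q))) = r"
proof -
  define x where "x = fst C"
  define y where "y = snd C"
  have q: "q = cos b * x + sin b * y" using onC unfolding on_line_def dotp_def nrm_def x_def y_def by simp
  have p: "p = r + cos a * (x + r * cos b) + sin a * (y + r * sin b)"
    using e unfolding cc dotp_def nrm_def x_def y_def by simp
  have C: "C = (x, y)" unfolding x_def y_def by simp
  show ?thesis
    unfolding p q C vf_def dotp_def tng_def fst_conv snd_conv
    using D unfolding den_def
    apply (simp add: divide_simps)
    using sin_cos_squared_add[of a] sin_cos_squared_add[of b] by algebra
qed

lemma halfB:
  assumes D: "den a b \<noteq> 0" and onC: "on_line a p C"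
    and cc: "c = (fst C + r * cos a, snd C + r * sin a)" and e: "q - dotp (nrm b) c = r"
  shows "dotp (tng a) (vf a (dotp (tng a) C - dotp (tng a) (vf a p b q)) b 0)
       - dotp (tng b) (vf a (dotp (tng a) C - dotp (tng a) (vf a p b q)) b 0) = - r"
proof -
  define x where "x = fst C"
  define y where "y = snd C"
  have p: "p = cos a * x + sin a * y" using onC unfolding on_line_def dotp_def nrm_def x_def y_def by simp
  have q: "q = r + cos b * (x + r * cos a) + sin b * (y + r * sin a)"
    using e unfolding cc dotp_def nrm_def x_def y_def by simp
  have C: "C = (x, y)" unfolding x_def y_def by simp
  show ?thesis
    unfolding p q C vf_def dotp_def tng_def fst_conv snd_conv
    using D unfolding den_def
    apply (simp add: divide_simps)
    using sin_cos_squared_add[of a] sin_cos_squared_add[of b] by algebra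
qed

lemma cprv_eq: "j < n \<Longrightarrow> cprv n j = (if j = 0 then n - 1 else j - 1)"
  unfolding cprv_def
  by (cases "j = 0") (auto simp: mod_if)

lemma cnxt_eq: "j < n \<Longrightarrow> cnxt n j = (if j = n - 1 then 0 else j + 1)"
  unfolding cnxt_def by (auto simp: mod_if)

lemma den_pos_turn:
  assumes "0 < turn n alpha k" "turn n alpha k < pi"
  shows "den (alpha k) (alpha (cnxt n k)) > 0"
proof -
  define x where "x = alpha (cnxt n k) - alpha k"
  define m where "m = \<lfloor>x / (2 * pi)\<rfloor>"
  have "sin (turn n alpha k) = sin x"
    unfolding turn_def red_angle_def x_def[symmetric] m_def[symmetric]
    by (simp add: sin_diff)
  moreover have "sin (turn n alpha k) > 0" using assms by (intro sin_gt_zero)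
  moreover have "sin x = den (alpha k) (alpha (cnxt n k))"
    unfolding x_def den_def by (simp add: sin_diff)
  ultimately show ?thesis by simp
qed

lemma dotp_diff: "dotp u (v - w) = dotp u v - dotp u w"
  by (simp add: dotp_def algebra_simps)

lemma vf_zero: "vf a 0 b 0 = (0, 0)"
  by (simp add: vf_def)

theorem mainTheorem7:
  fixes n :: nat and alpha p :: "nat \<Rightarrow> real" and i :: nat
  assumes "convex_ngon n alpha p" and "i < n"
  shows "((\<lambda>t. perimeter n (alpha(i := alpha i + t))
                 (p(i := p i + t * det2 (nrm (alpha i)) (tangpt n alpha p i))))
          has_real_derivative 0) (at 0)"
proof -
  have n3: "3 \<le> n" and turns: "\<And>k. k < n \<Longrightarrow> 0 < turn n alpha k \<and> turn n alpha k < pi"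
    and sides: "\<And>k. k < n \<Longrightarrow> dotp (tng (alpha k)) (vertex n alpha p k - vertex n alpha p (cprv n k)) > 0"
    using assms(1) unfolding convex_ngon_def by auto
  have i: "i < n" by fact
  have cnlt: "\<And>k. k < n \<Longrightarrow> cnxt n k < n" using n3 by (auto simp: cnxt_eq)
  have cplt: "\<And>k. k < n \<Longrightarrow> cprv n k < n" using n3 by (auto simp: cprv_eq)
  have cnp: "\<And>k. k < n \<Longrightarrow> cnxt n (cprv n k) = k" using n3 by (auto simp: cnxt_eq cprv_eq)
  have cpn: "\<And>k. k < n \<Longrightarrow> cprv n (cnxt n k) = k" using n3 by (auto simp: cnxt_eq cprv_eq)
  have denpos: "\<And>k. k < n \<Longrightarrow> den (alpha k) (alpha (cnxt n k)) > 0"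
    using turns den_pos_turn by blast
  define s where "s = det2 (nrm (alpha i)) (tangpt n alpha p i)"
  define dl where "dl k = (if k = i then 1 else 0::real)" for k
  define ds where "ds k = (if k = i then s else 0::real)" for k
  have Aeq: "\<And>t. alpha(i := alpha i + t) = (\<lambda>k. alpha k + t * dl k)"
    unfolding dl_def by auto
  have Peq: "\<And>t. p(i := p i + t * s) = (\<lambda>k. p k + t * ds k)"
    unfolding ds_def by auto
  define W where "W t k = vf (alpha k + t * dl k) (p k + t * ds k)
     (alpha (cnxt n k) + t * dl (cnxt n k)) (p (cnxt n k) + t * ds (cnxt n k))" for t k
  define V where "V k = vertex n alpha p k" for k
  have VW: "\<And>k. k < n \<Longrightarrow> V k = vf (alpha k) (p k) (alpha (cnxt n k)) (p (cnxt n k))"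
    unfolding V_def using denpos by (intro vertex_eq) (simp add: less_imp_neq[symmetric])
  have ev: "eventually (\<lambda>t. \<forall>k\<in>{..<n}. den (alpha k + t * dl k) (alpha (cnxt n k) + t * dl (cnxt n k)) \<noteq> 0) (nhds 0)"
  proof (rule eventually_ball_finite, simp, intro ballI)
    fix k assume k: "k \<in> {..<n}"
    have lim: "((\<lambda>t. den (alpha k + t * dl k) (alpha (cnxt n k) + t * dl (cnxt n k)))
        \<longlongrightarrow> den (alpha k) (alpha (cnxt n k))) (at 0)"
      unfolding den_def by (rule tendsto_eq_intros refl | simp)+
    have "eventually (\<lambda>t. den (alpha k + t * dl k) (alpha (cnxt n k) + t * dl (cnxt n k)) \<noteq> 0) (at 0)"
      using tendsto_imp_eventually_ne[OF lim] denpos k by (simp add: less_imp_neq[symmetric])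
    then show "eventually (\<lambda>t. den (alpha k + t * dl k) (alpha (cnxt n k) + t * dl (cnxt n k)) \<noteq> 0) (nhds 0)"
      unfolding eventually_nhds_conv_at using denpos k by (simp add: less_imp_neq[symmetric])
  qed
  have per_eq: "eventually (\<lambda>t. perimeter n (alpha(i := alpha i + t)) (p(i := p i + t * s))
      = (\<Sum>j<n. dist (W t (cprv n j)) (W t j))) (nhds 0)"
  proof (rule eventually_mono[OF ev])
    fix t assume h: "\<forall>k\<in>{..<n}. den (alpha k + t * dl k) (alpha (cnxt n k) + t * dl (cnxt n k)) \<noteq> 0"
    have vt: "vertex n (\<lambda>k. alpha k + t * dl k) (\<lambda>k. p k + t * ds k) k = W t k" if "k < n" for k
      unfolding W_def using h that by (intro vertex_eq) simp
    show "perimeter n (alpha(i := alpha i + t)) (p(i := p i + t * s)) = (\<Sum>j<n. dist (W t (cprv n j)) (W t j))"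
      unfolding perimeter_def Aeq Peq
      by (rule sum.cong) (simp_all add: vt cplt)
  qed
  define W' where "W' k = vf (alpha k) (ds k - dl k * dotp (tng (alpha k)) (V k)) (alpha (cnxt n k))
      (ds (cnxt n k) - dl (cnxt n k) * dotp (tng (alpha (cnxt n k))) (V k))" for k
  have Wd1: "((\<lambda>t. fst (W t k)) has_real_derivative fst (W' k)) (at 0)"
    and Wd2: "((\<lambda>t. snd (W t k)) has_real_derivative snd (W' k)) (at 0)" if k: "k < n" for k
    unfolding W_def W'_def VW[OF k] using vf_deriv[of "alpha k" "alpha (cnxt n k)"] denpos[OF k] by auto
  have W0: "W 0 k = V k" if "k < n" for k unfolding W_def VW[OF that] by simp
  have trm: "((\<lambda>t. dist (W t (cprv n j)) (W t j)) has_real_derivative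
       dotp (tng (alpha j)) (W' j - W' (cprv n j))) (at 0)" if j: "j < n" for j
  proof -
    define u where "u = V (cprv n j)"
    define w where "w = V j"
    define l where "l = dotp (tng (alpha j)) (w - u)"
    have l: "l > 0" unfolding l_def u_def w_def V_def using sides[OF j] .
    have won: "cos (alpha j) * fst w + sin (alpha j) * snd w = p j"
      using vf_on[of "alpha j" "alpha (cnxt n j)" "p j" "p (cnxt n j)"] denpos[OF j]
      unfolding w_def VW[OF j] on_line_def dotp_def nrm_def by auto
    have uon: "cos (alpha j) * fst u + sin (alpha j) * snd u = p j"
      using vf_on[of "alpha (cprv n j)" "alpha j" "p (cprv n j)" "p j"] denpos[OF cplt[OF j]]
      unfolding u_def VW[OF cplt[OF j]] cnp[OF j] on_line_def dotp_def nrm_def by auto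
    have o: "cos (alpha j) * (fst w - fst u) + sin (alpha j) * (snd w - snd u) = 0"
      using won uon by (simp add: algebra_simps)
    have Le: "l = - sin (alpha j) * (fst w - fst u) + cos (alpha j) * (snd w - snd u)"
      unfolding l_def dotp_def tng_def by simp
    have s1: "(sin (alpha j))^2 + (cos (alpha j))^2 = 1" by simp
    have wu: "fst w - fst u = - sin (alpha j) * l" "snd w - snd u = cos (alpha j) * l"
      using decomp[OF s1 o] unfolding Le by simp_all
    have dl: "dist (fst u, snd u) (fst w, snd w) = l"
    proof -
      have "dist (fst u, snd u) (fst w, snd w) = sqrt ((fst w - fst u)^2 + (snd w - snd u)^2)"
        by (subst dist_Pair_Pair) (simp add: dist_real_def power2_commute)
      also have "(fst w - fst u)^2 + (snd w - snd u)^2 = l^2 * ((sin (alpha j))^2 + (cos (alpha j))^2)"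
        unfolding wu by (simp only: power_mult_distrib algebra_simps power2_minus)
      finally show ?thesis using l by simp
    qed
    have ne: "(fst u, snd u) \<noteq> (fst w, snd w)" using dl l by auto
    have eqd: "\<And>t. dist (W t (cprv n j)) (W t j) = dist (fst (W t (cprv n j)), snd (W t (cprv n j))) (fst (W t j), snd (W t j))"
      by simp
    have "((\<lambda>t. dist (fst (W t (cprv n j)), snd (W t (cprv n j))) (fst (W t j), snd (W t j))) has_real_derivative
       ((fst u - fst w) * (fst (W' (cprv n j)) - fst (W' j)) + (snd u - snd w) * (snd (W' (cprv n j)) - snd (W' j)))
         / dist (fst u, snd u) (fst w, snd w)) (at 0)"
      using dist_deriv[OF Wd1[OF cplt[OF j]] Wd2[OF cplt[OF j]] Wd1[OF j] Wd2[OF j]] ne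
      unfolding W0[OF j] W0[OF cplt[OF j]] u_def w_def by simp
    moreover have "((fst u - fst w) * (fst (W' (cprv n j)) - fst (W' j)) + (snd u - snd w) * (snd (W' (cprv n j)) - snd (W' j)))
         / dist (fst u, snd u) (fst w, snd w) = dotp (tng (alpha j)) (W' j - W' (cprv n j))"
    proof -
      have e1: "fst u - fst w = sin (alpha j) * l" and e2: "snd u - snd w = - cos (alpha j) * l" using wu by simp_all
      show ?thesis unfolding dl e1 e2 using l by (simp add: dotp_def tng_def field_simps)
    qed
    ultimately show ?thesis unfolding eqd by simp
  qed
  have sumd: "((\<lambda>t. \<Sum>j<n. dist (W t (cprv n j)) (W t j)) has_real_derivative
      (\<Sum>j<n. dotp (tng (alpha j)) (W' j - W' (cprv n j)))) (at 0)"
    by (rule DERIV_sum) (use trm in simp)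
  have cpinj: "\<And>x y. x < n \<Longrightarrow> y < n \<Longrightarrow> cprv n x = cprv n y \<Longrightarrow> x = y"
    using cnp by metis
  have cnpi: "cprv n i \<noteq> i" using n3 i by (auto simp: cprv_eq)
  have cnni: "cnxt n i \<noteq> i" using n3 i by (auto simp: cnxt_eq)
  have cpcn: "cprv n i \<noteq> cnxt n i" using n3 i by (auto simp: cnxt_eq cprv_eq split: if_splits)
  have cpcp: "cprv n (cprv n i) \<noteq> i" using n3 i by (auto simp: cprv_eq split: if_splits)
  have zeroW: "W' k = (0, 0)" if k: "k < n" "k \<noteq> cprv n i" "k \<noteq> i" for k
  proof -
    have "cnxt n k \<noteq> i" using cpn[OF k(1)] k(2) by metis
    then show ?thesis unfolding W'_def dl_def ds_def using k by (simp add: vf_zero)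
  qed
  define g where "g j = dotp (tng (alpha j)) (W' j - W' (cprv n j))" for j
  have g0: "g j = 0" if j: "j \<in> {..<n} - {cprv n i, i, cnxt n i}" for j
  proof -
    have j': "j < n" "j \<noteq> cprv n i" "j \<noteq> i" "j \<noteq> cnxt n i" using j by auto
    have "cprv n j \<noteq> cprv n i" using cpinj[OF j'(1) i] j'(3) by blast
    moreover have "cprv n j \<noteq> i" using cnp[OF j'(1)] j'(4) by metis
    ultimately show ?thesis unfolding g_def using zeroW[OF j'(1-3)] zeroW[OF cplt[OF j'(1)]]
      by (simp add: dotp_def)
  qed
  have "(\<Sum>j<n. g j) = (\<Sum>j\<in>{cprv n i, i, cnxt n i}. g j)"
    by (rule sum.mono_neutral_right) (use g0 i cplt cnlt in auto)
  also have "\<dots> = g (cprv n i) + g i + g (cnxt n i)"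
    using cnpi cnni cpcn by simp
  finally have sg: "(\<Sum>j<n. g j) = g (cprv n i) + g i + g (cnxt n i)" .
  have ex1: "\<exists>!C. \<exists>c r. circK n alpha p i c r \<and> on_line (alpha i) (p i) C \<and> dist c C = r"
    unfolding circK_def
  proof (rule tang_char)
    show "den (alpha (cprv n i)) (alpha i) > 0" using denpos[OF cplt[OF i]] cnp[OF i] by simp
    show "den (alpha i) (alpha (cnxt n i)) > 0" using denpos[OF i] .
    show "dotp (tng (alpha i)) (vf (alpha i) (p i) (alpha (cnxt n i)) (p (cnxt n i)) -
        vf (alpha (cprv n i)) (p (cprv n i)) (alpha i) (p i)) > 0"
      using sides[OF i] VW[OF i] VW[OF cplt[OF i]] cnp[OF i] unfolding V_def by simp
  qed
  define C where "C = tangpt n alpha p i"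
  obtain c r where cr: "circK n alpha p i c r" and onC: "on_line (alpha i) (p i) C" and dC: "dist c C = r"
    using theI'[OF ex1] unfolding C_def tangpt_def by blast
  have e1: "dotp (nrm (alpha i)) c - p i = r" using cr unfolding circK_def by simp
  have e0: "p (cprv n i) - dotp (nrm (alpha (cprv n i))) c = r" using cr unfolding circK_def by simp
  have e2: "p (cnxt n i) - dotp (nrm (alpha (cnxt n i))) c = r" using cr unfolding circK_def by simp
  have cc: "c = (fst C + r * cos (alpha i), snd C + r * sin (alpha i))"
    by (rule circ_center[OF onC e1 dC])
  have sC: "s = dotp (tng (alpha i)) C"
    unfolding s_def C_def det2_def nrm_def tng_def dotp_def by (simp add: algebra_simps)
  have hA: "dotp (tng (alpha (cprv n i))) (W' (cprv n i)) - dotp (tng (alpha i)) (W' (cprv n i)) = r"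
  proof -
    have "W' (cprv n i) = vf (alpha (cprv n i)) 0 (alpha i)
        (dotp (tng (alpha i)) C - dotp (tng (alpha i)) (vf (alpha (cprv n i)) (p (cprv n i)) (alpha i) (p i)))"
      unfolding W'_def dl_def ds_def VW[OF cplt[OF i]] cnp[OF i] sC using cnpi by simp
    then show ?thesis
      using halfA[OF _ onC cc e0] denpos[OF cplt[OF i]] cnp[OF i] by simp
  qed
  have hB: "dotp (tng (alpha i)) (W' i) - dotp (tng (alpha (cnxt n i))) (W' i) = - r"
  proof -
    have "W' i = vf (alpha i)
        (dotp (tng (alpha i)) C - dotp (tng (alpha i)) (vf (alpha i) (p i) (alpha (cnxt n i)) (p (cnxt n i))))
        (alpha (cnxt n i)) 0"
      unfolding W'_def dl_def ds_def VW[OF i] sC using cnni by simp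
    then show ?thesis
      using halfB[OF _ onC cc e2] denpos[OF i] by simp
  qed
  have z1: "W' (cprv n (cprv n i)) = (0, 0)"
    using zeroW[OF cplt[OF cplt[OF i]]] cpcp cpinj[OF cplt[OF i] i] cnpi cplt[OF i] by metis
  have z2: "W' (cnxt n i) = (0, 0)" using zeroW[OF cnlt[OF i]] cpcn cnni by metis
  have sum0: "(\<Sum>j<n. dotp (tng (alpha j)) (W' j - W' (cprv n j))) = 0"
    using sg hA hB unfolding g_def cpn[OF i] z1 z2
    by (simp add: dotp_def right_diff_distrib)
  show ?thesis
    unfolding s_def[symmetric]
    using DERIV_cong_ev[OF refl per_eq refl] sumd sum0 by simp
qed

end
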